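(* Let $\mathbf{X}=(X;f,\preccurlyeq,\tau)$ be a Priestley space $(X;\preccurlyeq,\tau)$ endowed with a map $f\colon X\to X$ that is an order-reversing homeomorphism of order two (i.e. $f(f(x))=x$ for all $x\in X$). Choose a subset $Y\subseteq X$ satisfying: (a) every $x\in X$ with $f(x)=x$ belongs to $Y$; (b) for every $x\in X$ with $x\neq f(x)$, exactly one of $x$, $f(x)$ belongs to $Y$. Then the system $$\sigma=\{Z\subseteq Y\mid Z\cup f(Z)\text{ is open in } (X,\tau)\}$$ is a topology on $Y$, and $(Y,\sigma)$ is a Boolean space (i.e. compact, Hausdorff and having a basis of clopen sets).
   Context: A Priestley space is a compact ordered topological space $(X;\preccurlyeq,\tau)$ such that whenever $x\not\preccurlyeq y$ there is a clopen up-set containing $x$ but not $y$. An order-reversing map $f$ satisfies $x\preccurlyeq y\Rightarrow f(y)\preccurlyeq f(x)$. *)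

theory Defs
  imports "HOL-Analysis.Analysis"
begin

definition partial_order_on_set :: "'a set \<Rightarrow> ('a \<Rightarrow> 'a \<Rightarrow> bool) \<Rightarrow> bool" where
  "partial_order_on_set X le \<longleftrightarrow>
     (\<forall>x\<in>X. le x x) \<and>
     (\<forall>x\<in>X. \<forall>y\<in>X. le x y \<and> le y x \<longrightarrow> x = y) \<and>
     (\<forall>x\<in>X. \<forall>y\<in>X. \<forall>z\<in>X. le x y \<and> le y z \<longrightarrow> le x z)"

definition up_set :: "'a set \<Rightarrow> ('a \<Rightarrow> 'a \<Rightarrow> bool) \<Rightarrow> 'a set \<Rightarrow> bool" where
  "up_set X le U \<longleftrightarrow> U \<subseteq> X \<and> (\<forall>x\<in>U. \<forall>y\<in>X. le x y \<longrightarrow> y \<in> U)"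

definition Priestley_space :: "'a topology \<Rightarrow> ('a \<Rightarrow> 'a \<Rightarrow> bool) \<Rightarrow> bool" where
  "Priestley_space T le \<longleftrightarrow>
     partial_order_on_set (topspace T) le \<and> compact_space T \<and>
     (\<forall>x\<in>topspace T. \<forall>y\<in>topspace T. \<not> le x y \<longrightarrow>
        (\<exists>U. openin T U \<and> closedin T U \<and> up_set (topspace T) le U \<and> x \<in> U \<and> y \<notin> U))"

definition order_reversing_on :: "'a set \<Rightarrow> ('a \<Rightarrow> 'a \<Rightarrow> bool) \<Rightarrow> ('a \<Rightarrow> 'a) \<Rightarrow> bool" where
  "order_reversing_on X le f \<longleftrightarrow> (\<forall>x\<in>X. \<forall>y\<in>X. le x y \<longrightarrow> le (f y) (f x))"

definition Boolean_space :: "'a topology \<Rightarrow> bool" where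
  "Boolean_space S \<longleftrightarrow> compact_space S \<and> Hausdorff_space S \<and>
     (\<forall>U. openin S U \<longrightarrow> (\<exists>\<B>. (\<forall>B\<in>\<B>. openin S B \<and> closedin S B) \<and> \<Union>\<B> = U))"

end

theory Submission
  imports Defs
begin

locale psetting =
  fixes T :: "'a topology" and le :: "'a \<Rightarrow> 'a \<Rightarrow> bool" and f :: "'a \<Rightarrow> 'a" and Y :: "'a set"
  assumes P: "Priestley_space T le"
    and H: "homeomorphic_map T T f"
    and R: "order_reversing_on (topspace T) le f"
    and I: "\<forall>x\<in>topspace T. f (f x) = x"
    and Ysub: "Y \<subseteq> topspace T"
    and Fix: "\<forall>x\<in>topspace T. f x = x \<longrightarrow> x \<in> Y"
    and Ex: "\<forall>x\<in>topspace T. x \<noteq> f x \<longrightarrow> (x \<in> Y \<longleftrightarrow> f x \<notin> Y)"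
begin

abbreviation "X \<equiv> topspace T"

lemma fX: "x \<in> X \<Longrightarrow> f x \<in> X"
  using H homeomorphic_imp_continuous_map continuous_map_image_subset_topspace by blast

lemma ff: "x \<in> X \<Longrightarrow> f (f x) = x" using I by blast

lemma ffimg: "V \<subseteq> X \<Longrightarrow> f ` f ` V = V"
  using ff by (force simp: image_iff)

lemma fimgX: "V \<subseteq> X \<Longrightarrow> f ` V \<subseteq> X" using fX by blast

lemma open_f: "openin T V \<Longrightarrow> openin T (f ` V)"
  using homeomorphic_map_openness[OF H] openin_subset by blast

lemma closed_f: "closedin T V \<Longrightarrow> closedin T (f ` V)"
  using homeomorphic_map_closedness[OF H] closedin_subset by blast

lemma key: "y \<in> Y \<Longrightarrow> z \<in> Y \<Longrightarrow> y = f z \<Longrightarrow> y = z"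
  using Ex Ysub by (metis subsetD)

lemma memY: "Z \<subseteq> Y \<Longrightarrow> y \<in> Y \<Longrightarrow> y \<in> Z \<union> f ` Z \<Longrightarrow> y \<in> Z"
proof -
  assume a: "Z \<subseteq> Y" "y \<in> Y" "y \<in> Z \<union> f ` Z"
  show "y \<in> Z"
  proof (cases "y \<in> Z")
    case False
    then obtain z where z: "z \<in> Z" "y = f z" using a by blast
    have "z \<in> Y" using z a by blast
    then have "y = z" using key[OF a(2) _ z(2)] by blast
    then show ?thesis using z by simp
  qed simp
qed

lemma notY: "x \<in> X \<Longrightarrow> x \<notin> Y \<Longrightarrow> f x \<in> Y"
  using Ex Fix by metis

lemma inYorf: "x \<in> X \<Longrightarrow> x \<in> Y \<or> (f x \<in> Y \<and> x = f (f x))"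
  by (metis notY ff)

definition "clopen C \<longleftrightarrow> openin T C \<and> closedin T C"

lemma sep:
  assumes "p \<in> X" "q \<in> X" "p \<noteq> q"
  shows "\<exists>C. clopen C \<and> p \<in> C \<and> q \<notin> C"
proof -
  have po: "partial_order_on_set X le" and ax: "\<forall>x\<in>X. \<forall>y\<in>X. \<not> le x y \<longrightarrow>
        (\<exists>U. openin T U \<and> closedin T U \<and> up_set X le U \<and> x \<in> U \<and> y \<notin> U)"
    using P unfolding Priestley_space_def by auto
  have "\<not> le p q \<or> \<not> le q p" using po assms unfolding partial_order_on_set_def by blast
  then show ?thesis
  proof
    assume "\<not> le p q"
    then show ?thesis using ax assms unfolding clopen_def by blast
  next
    assume "\<not> le q p"
    then obtain U where U: "openin T U" "closedin T U" "q \<in> U" "p \<notin> U" using ax assms by blast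
    have "clopen (X - U)" using U unfolding clopen_def by (simp add: openin_diff closedin_diff)
    then show ?thesis using U assms by blast
  qed
qed

lemma clopen_sub: "clopen C \<Longrightarrow> C \<subseteq> X" unfolding clopen_def using openin_subset by blast

lemma clopen_Int: "clopen A \<Longrightarrow> clopen B \<Longrightarrow> clopen (A \<inter> B)"
  unfolding clopen_def by auto

lemma clopen_Un: "clopen A \<Longrightarrow> clopen B \<Longrightarrow> clopen (A \<union> B)"
  unfolding clopen_def by auto

lemma clopen_compl: "clopen A \<Longrightarrow> clopen (X - A)"
  unfolding clopen_def by (simp add: openin_diff closedin_diff)

lemma clopen_f: "clopen A \<Longrightarrow> clopen (f ` A)"
  unfolding clopen_def using open_f closed_f by blast

lemma basisT:
  assumes W: "openin T W" and z: "z \<in> W"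
  shows "\<exists>U. clopen U \<and> z \<in> U \<and> U \<subseteq> W"
proof -
  have zX: "z \<in> X" using W z openin_subset by blast
  have "\<forall>p \<in> X - W. \<exists>C. clopen C \<and> p \<in> C \<and> z \<notin> C"
    using sep zX z by blast
  then obtain C where C: "\<And>p. p \<in> X - W \<Longrightarrow> clopen (C p) \<and> p \<in> C p \<and> z \<notin> C p"
    by metis
  have cpt: "compactin T (X - W)"
    using P W unfolding Priestley_space_def
    by (simp add: closedin_compact_space closedin_diff)
  then obtain F where F: "finite F" "F \<subseteq> C ` (X - W)" "X - W \<subseteq> \<Union>F"
    using compactinD[OF cpt, of "C ` (X - W)"] C unfolding clopen_def by blast
  have cl: "clopen (\<Union>F)"
  proof -
    have "closedin T (\<Union>F)" using F C unfolding clopen_def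
      by (intro closedin_Union) auto
    moreover have "openin T (\<Union>F)" using F C unfolding clopen_def
      by (intro openin_Union) auto
    ultimately show ?thesis unfolding clopen_def by blast
  qed
  have "z \<notin> \<Union>F" using F C by blast
  then show ?thesis using clopen_compl[OF cl] F zX by (intro exI[of _ "X - \<Union>F"]) blast
qed

definition Op :: "'a set \<Rightarrow> bool" where "Op Z \<longleftrightarrow> Z \<subseteq> Y \<and> openin T (Z \<union> f ` Z)"

lemma int_eq:
  assumes "Z1 \<subseteq> Y" "Z2 \<subseteq> Y"
  shows "(Z1 \<inter> Z2) \<union> f ` (Z1 \<inter> Z2) = (Z1 \<union> f ` Z1) \<inter> (Z2 \<union> f ` Z2)"
proof
  show "(Z1 \<inter> Z2) \<union> f ` (Z1 \<inter> Z2) \<subseteq> (Z1 \<union> f ` Z1) \<inter> (Z2 \<union> f ` Z2)" by blast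
next
  show "(Z1 \<union> f ` Z1) \<inter> (Z2 \<union> f ` Z2) \<subseteq> (Z1 \<inter> Z2) \<union> f ` (Z1 \<inter> Z2)"
  proof
    fix x assume x: "x \<in> (Z1 \<union> f ` Z1) \<inter> (Z2 \<union> f ` Z2)"
    have xX: "x \<in> X" using x assms Ysub fX by blast
    show "x \<in> (Z1 \<inter> Z2) \<union> f ` (Z1 \<inter> Z2)"
    proof (cases "x \<in> Y")
      case True
      have "x \<in> Z1 \<union> f ` Z1" "x \<in> Z2 \<union> f ` Z2" using x by auto
      then have "x \<in> Z1" "x \<in> Z2" using memY assms True by blast+
      then show ?thesis by blast
    next
      case False
      then have "x \<notin> Z1" "x \<notin> Z2" using assms by blast+
      then obtain z1 z2 where "z1 \<in> Z1" "z2 \<in> Z2" "x = f z1" "x = f z2" using x by blast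
      moreover have "z1 \<in> X" "z2 \<in> X" using calculation assms Ysub by auto
      ultimately have "z1 = z2" using ff by metis
      then show ?thesis using \<open>z1 \<in> Z1\<close> \<open>z2 \<in> Z2\<close> \<open>x = f z1\<close> by blast
    qed
  qed
qed

lemma isT: "istopology Op"
  unfolding istopology_def
proof (intro conjI allI impI)
  fix S1 S2 assume "Op S1" "Op S2"
  then show "Op (S1 \<inter> S2)" unfolding Op_def using int_eq by (auto simp del: Un_Int_eq)
next
  fix K assume K: "\<forall>S\<in>K. Op S"
  have eq: "\<Union>K \<union> f ` \<Union>K = \<Union>((\<lambda>Z. Z \<union> f ` Z) ` K)" by blast
  show "Op (\<Union>K)" using K unfolding Op_def eq by (auto intro!: openin_Union)
qed

abbreviation "S \<equiv> topology Op"

lemma openS: "openin S = Op" using isT by simp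

lemma YX: "Y \<union> f ` Y = X"
  using Ysub fimgX inYorf by blast

lemma topS: "topspace S = Y"
proof -
  have "Op Y" unfolding Op_def using YX by simp
  then have "Y \<subseteq> topspace S" using openS openin_subset by metis
  moreover have "topspace S \<subseteq> Y" unfolding topspace_def openS Op_def by auto
  ultimately show ?thesis by blast
qed

lemma inv_eq: "U \<subseteq> X \<Longrightarrow> f ` U \<subseteq> U \<Longrightarrow> (U \<inter> Y) \<union> f ` (U \<inter> Y) = U"
  using inYorf by auto

lemma inv_clopenS:
  assumes "clopen U" "f ` U \<subseteq> U"
  shows "openin S (U \<inter> Y) \<and> closedin S (U \<inter> Y)"
proof -
  have UX: "U \<subseteq> X" using assms clopen_sub by blast
  have o1: "Op (U \<inter> Y)" unfolding Op_def using inv_eq[OF UX assms(2)] assms(1) clopen_def by auto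
  have c: "clopen (X - U)" using clopen_compl assms by blast
  have inv2: "f ` (X - U) \<subseteq> X - U"
  proof
    fix y assume "y \<in> f ` (X - U)"
    then obtain x where x: "x \<in> X" "x \<notin> U" "y = f x" by blast
    have "f y \<notin> U \<or> True" by simp
    show "y \<in> X - U"
    proof
      show "y \<in> X" using x fX by blast
      show "y \<notin> U" using x assms(2) ff by (metis image_eqI subsetD)
    qed
  qed
  have o2: "Op ((X - U) \<inter> Y)" unfolding Op_def
    using inv_eq[OF _ inv2] c clopen_def by auto
  have "Y - U \<inter> Y = (X - U) \<inter> Y" using Ysub by blast
  then have "closedin S (U \<inter> Y)" unfolding closedin_def topS openS using o2 by auto
  then show ?thesis using o1 openS by simp
qed

lemma sym_inv: "V \<subseteq> X \<Longrightarrow> f ` (V \<inter> f ` V) \<subseteq> V \<inter> f ` V"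
  using ffimg by (metis image_Int_subset inf_commute order_refl)

lemma sym_inv2: "V \<subseteq> X \<Longrightarrow> f ` (V \<union> f ` V) \<subseteq> V \<union> f ` V"
  using ffimg by (metis image_Un sup_commute order_refl)

lemma compactS: "compact_space S"
  unfolding compact_space_alt topS
proof (intro allI impI)
  fix \<U> assume A: "(\<forall>U\<in>\<U>. openin S U) \<and> Y \<subseteq> \<Union>\<U>"
  let ?V = "(\<lambda>Z. Z \<union> f ` Z) ` \<U>"
  have "\<And>Z. Z \<in> \<U> \<Longrightarrow> Op Z" using A openS by simp
  then have "\<forall>V\<in>?V. openin T V" unfolding Op_def by blast
  moreover have "X \<subseteq> \<Union>?V"
  proof
    fix x assume "x \<in> X"
    then consider "x \<in> Y" | "f x \<in> Y" "x = f (f x)" using inYorf by blast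
    then show "x \<in> \<Union>?V"
    proof cases
      case 1
      then obtain Z where "Z \<in> \<U>" "x \<in> Z" using A by blast
      then show ?thesis by blast
    next
      case 2
      then obtain Z where Z: "Z \<in> \<U>" "f x \<in> Z" using A by blast
      then have "x \<in> f ` Z" using 2(2) by (metis image_eqI)
      then show ?thesis using Z by blast
    qed
  qed
  ultimately have cov: "(\<forall>V\<in>?V. openin T V) \<and> X \<subseteq> \<Union>?V" by blast
  have cT: "compact_space T" using P unfolding Priestley_space_def by blast
  have "\<exists>G. finite G \<and> G \<subseteq> ?V \<and> X \<subseteq> \<Union>G"
    by (rule compact_space_alt[THEN iffD1, OF cT, rule_format, OF cov])
  then obtain G where G: "finite G" "G \<subseteq> ?V" "X \<subseteq> \<Union>G" by blast
  then obtain F where F: "F \<subseteq> \<U>" "finite F" "G = (\<lambda>Z. Z \<union> f ` Z) ` F"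
    using finite_subset_image[OF G(1) G(2)] by blast
  have "Y \<subseteq> \<Union>F"
  proof
    fix y assume y: "y \<in> Y"
    then obtain Z where Z: "Z \<in> F" "y \<in> Z \<union> f ` Z" proof -
      have "y \<in> \<Union>G" using y Ysub G(3) by blast
      then show ?thesis using F(3) that by blast
    qed
    have "Op Z" using Z F A openS by auto
    then have "Z \<subseteq> Y" unfolding Op_def by blast
    then have "y \<in> Z" using Z memY y by blast
    then show "y \<in> \<Union>F" using Z by blast
  qed
  then show "\<exists>F. finite F \<and> F \<subseteq> \<U> \<and> Y \<subseteq> \<Union>F" using F by blast
qed

lemma HausS: "Hausdorff_space S"
  unfolding Hausdorff_space_def topS
proof (intro allI impI)
  fix x y assume A: "x \<in> Y \<and> y \<in> Y \<and> x \<noteq> y"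
  have xX: "x \<in> X" and yX: "y \<in> X" using A Ysub by auto
  have d1: "x \<noteq> f y" using A key by blast
  have d2: "f x \<noteq> y" using A key by metis
  have d3: "f x \<noteq> f y" using A ff xX yX by metis
  obtain C1 where C1: "clopen C1" "x \<in> C1" "y \<notin> C1" using sep xX yX A by blast
  obtain C2 where C2: "clopen C2" "x \<in> C2" "f y \<notin> C2" using sep xX fX[OF yX] d1 by blast
  obtain C3 where C3: "clopen C3" "f x \<in> C3" "y \<notin> C3" using sep fX[OF xX] yX d2 by blast
  obtain C4 where C4: "clopen C4" "f x \<in> C4" "f y \<notin> C4" using sep fX[OF xX] fX[OF yX] d3 by blast
  define V where "V = (C1 \<inter> C2) \<union> (C3 \<inter> C4)"
  have cV: "clopen V" unfolding V_def using C1 C2 C3 C4 clopen_Int clopen_Un by auto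
  have VX: "V \<subseteq> X" using cV clopen_sub by blast
  define U where "U = V \<inter> f ` V"
  have cU: "clopen U" unfolding U_def using cV clopen_Int clopen_f by blast
  have iU: "f ` U \<subseteq> U" unfolding U_def using sym_inv VX by blast
  have xU: "x \<in> U" unfolding U_def V_def using C1 C2 C3 C4 ff[OF xX]
    by (metis IntI UnI1 UnI2 image_eqI)
  have yU: "y \<notin> U" "f y \<notin> U" unfolding U_def V_def using C1 C2 C3 C4 ff[OF yX] by auto
  have o1: "openin S (U \<inter> Y)" using inv_clopenS[OF cU iU] by blast
  have cl: "closedin S (U \<inter> Y)" using inv_clopenS[OF cU iU] by blast
  then have o2: "openin S (Y - U \<inter> Y)" using topS by (simp add: closedin_def)
  show "\<exists>U V. openin S U \<and> openin S V \<and> x \<in> U \<and> y \<in> V \<and> disjnt U V"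
    using o1 o2 xU yU A by (intro exI[of _ "U \<inter> Y"] exI[of _ "Y - U \<inter> Y"]) (auto simp: disjnt_def)
qed

lemma basisS: "openin S Z \<Longrightarrow> \<exists>\<B>. (\<forall>B\<in>\<B>. openin S B \<and> closedin S B) \<and> \<Union>\<B> = Z"
proof -
  assume "openin S Z"
  then have Z: "Z \<subseteq> Y" "openin T (Z \<union> f ` Z)" using openS Op_def by auto
  define W where "W = Z \<union> f ` Z"
  have WX: "W \<subseteq> X" using Z W_def openin_subset by blast
  have fW: "f ` W \<subseteq> W" unfolding W_def using sym_inv2 Z Ysub by blast
  define \<B> where "\<B> = {U \<inter> Y | U. clopen U \<and> f ` U \<subseteq> U \<and> U \<subseteq> W}"
  have 1: "\<forall>B\<in>\<B>. openin S B \<and> closedin S B" unfolding \<B>_def using inv_clopenS by blast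
  have 2: "\<Union>\<B> \<subseteq> Z"
  proof
    fix y assume "y \<in> \<Union>\<B>"
    then have "y \<in> W" "y \<in> Y" unfolding \<B>_def by auto
    then show "y \<in> Z" unfolding W_def using Z memY by blast
  qed
  have 3: "Z \<subseteq> \<Union>\<B>"
  proof
    fix z assume z: "z \<in> Z"
    then obtain U0 where U0: "clopen U0" "z \<in> U0" "U0 \<subseteq> W"
      using basisT Z W_def by blast
    define U where "U = U0 \<union> f ` U0"
    have "clopen U" unfolding U_def using U0 clopen_Un clopen_f by blast
    moreover have "f ` U \<subseteq> U" unfolding U_def using sym_inv2 U0 WX by blast
    moreover have "U \<subseteq> W" unfolding U_def using U0 fW by blast
    moreover have "z \<in> U \<inter> Y" unfolding U_def using U0 z Z by blast
    ultimately show "z \<in> \<Union>\<B>" unfolding \<B>_def by blast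
  qed
  show ?thesis using 1 2 3 by blast
qed

end

theorem mainTheorem1:
  fixes T :: "'a topology" and le :: "'a \<Rightarrow> 'a \<Rightarrow> bool" and f :: "'a \<Rightarrow> 'a" and Y :: "'a set"
  assumes "Priestley_space T le"
    and "homeomorphic_map T T f"
    and "order_reversing_on (topspace T) le f"
    and "\<forall>x\<in>topspace T. f (f x) = x"
    and "Y \<subseteq> topspace T"
    and "\<forall>x\<in>topspace T. f x = x \<longrightarrow> x \<in> Y"
    and "\<forall>x\<in>topspace T. x \<noteq> f x \<longrightarrow> (x \<in> Y \<longleftrightarrow> f x \<notin> Y)"
  shows "istopology (\<lambda>Z. Z \<subseteq> Y \<and> openin T (Z \<union> f ` Z))
       \<and> topspace (topology (\<lambda>Z. Z \<subseteq> Y \<and> openin T (Z \<union> f ` Z))) = Y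
       \<and> Boolean_space (topology (\<lambda>Z. Z \<subseteq> Y \<and> openin T (Z \<union> f ` Z)))"
proof -
  interpret psetting T le f Y using assms by unfold_locales
  have e: "(\<lambda>Z. Z \<subseteq> Y \<and> openin T (Z \<union> f ` Z)) = Op" by (rule ext) (simp add: Op_def)
  show ?thesis unfolding e Boolean_space_def
    using isT topS compactS HausS basisS by (intro conjI) auto
qed

end
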